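(* Let $(X,d)$ be a compact metric space and $F:X\to 2^X$ an onto, continuous set-valued map. If $F$ has the shadowing property, then $F^{-1}$ also has the shadowing property.
   Context: $2^X$ is the family of nonempty compact subsets of $X$ with Hausdorff metric $d_H$. A set-valued map $F$ is upper semicontinuous if for every $x$ and open $U\supset F(x)$ there is a neighborhood $V$ of $x$ with $F(y)\subset U$ for $y\in V$; lower semicontinuous if for every $x$ and open $U$ with $F(x)\cap U\ne\emptyset$ there is a neighborhood $V$ of $x$ with $F(y)\cap U\neq\emptyset$ for $y\in V$; continuous if both. $F$ is onto if every $y\in X$ lies in $F(x)$ for some $x$; then $F^{-1}(y)=\{x: y\in F(x)\}$ defines a set-valued map $F^{-1}:X\to 2^X$. For a set-valued map $G$, a $\delta$-pseudo-orbit is a sequence $\{x_n\}_{n\ge0}$ with $d(x_{n+1},G(x_n))<\delta$ for all $n$; a $G$-orbit is a sequence $(y_n)$ with $y_{n+1}\in G(y_n)$ for all $n$; $G$ has the shadowing property if for every $\varepsilon>0$ there is $\delta>0$ such that every $\delta$-pseudo-orbit $\{x_n\}$ admits a $G$-orbit $(y_n)$ with $d(x_n,y_n)<\varepsilon$ for all $n$. *)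

theory Defs
  imports "HOL-Analysis.Analysis"
begin

text \<open>Set-valued maps on the whole space (the type is the space X).
  A map into 2^X takes nonempty compact values.\<close>

definition setval_map :: "('a::metric_space \<Rightarrow> 'a set) \<Rightarrow> bool" where
  "setval_map F \<longleftrightarrow> (\<forall>x. F x \<noteq> {} \<and> compact (F x))"

definition usc :: "('a::topological_space \<Rightarrow> 'b::topological_space set) \<Rightarrow> bool" where
  "usc F \<longleftrightarrow> (\<forall>x U. open U \<and> F x \<subseteq> U \<longrightarrow>
      (\<exists>V. open V \<and> x \<in> V \<and> (\<forall>y\<in>V. F y \<subseteq> U)))"

definition lsc :: "('a::topological_space \<Rightarrow> 'b::topological_space set) \<Rightarrow> bool" where
  "lsc F \<longleftrightarrow> (\<forall>x U. open U \<and> F x \<inter> U \<noteq> {} \<longrightarrow>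
      (\<exists>V. open V \<and> x \<in> V \<and> (\<forall>y\<in>V. F y \<inter> U \<noteq> {})))"

definition setval_continuous :: "('a::topological_space \<Rightarrow> 'b::topological_space set) \<Rightarrow> bool" where
  "setval_continuous F \<longleftrightarrow> usc F \<and> lsc F"

definition setval_onto :: "('a \<Rightarrow> 'b set) \<Rightarrow> bool" where
  "setval_onto F \<longleftrightarrow> (\<forall>y. \<exists>x. y \<in> F x)"

definition setval_inverse :: "('a \<Rightarrow> 'b set) \<Rightarrow> 'b \<Rightarrow> 'a set" where
  "setval_inverse F y = {x. y \<in> F x}"

text \<open>d(x, A) = inf of distances; A is nonempty in all uses.\<close>
definition pseudo_orbit :: "('a::metric_space \<Rightarrow> 'a set) \<Rightarrow> real \<Rightarrow> (nat \<Rightarrow> 'a) \<Rightarrow> bool" where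
  "pseudo_orbit G \<delta> xs \<longleftrightarrow> (\<forall>n. infdist (xs (Suc n)) (G (xs n)) < \<delta>)"

definition is_orbit :: "('a \<Rightarrow> 'a set) \<Rightarrow> (nat \<Rightarrow> 'a) \<Rightarrow> bool" where
  "is_orbit G ys \<longleftrightarrow> (\<forall>n. ys (Suc n) \<in> G (ys n))"

definition shadowing :: "('a::metric_space \<Rightarrow> 'a set) \<Rightarrow> bool" where
  "shadowing G \<longleftrightarrow> (\<forall>\<epsilon>>0. \<exists>\<delta>>0. \<forall>xs. pseudo_orbit G \<delta> xs \<longrightarrow>
      (\<exists>ys. is_orbit G ys \<and> (\<forall>n. dist (xs n) (ys n) < \<epsilon>)))"

end

theory Submission
  imports Defs
begin

lemma infdist_lt_ex:
  fixes A :: "'a::metric_space set"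
  assumes "A \<noteq> {}" "infdist x A < d"
  shows "\<exists>a\<in>A. dist x a < d"
  using assms by (simp add: infdist_notempty cINF_less_iff)

lemma closed_graph:
  fixes F :: "'a::metric_space \<Rightarrow> 'a set"
  assumes usc: "usc F" and sm: "setval_map F"
    and a: "a \<longlonglongrightarrow> a0" and b: "b \<longlonglongrightarrow> b0"
    and ev: "eventually (\<lambda>k. b k \<in> F (a k)) sequentially"
  shows "b0 \<in> F a0"
proof (rule ccontr)
  assume nb: "b0 \<notin> F a0"
  have cl: "closed (F a0)" "F a0 \<noteq> {}" using sm by (auto simp: setval_map_def compact_imp_closed)
  define r where "r = infdist b0 (F a0)"
  have rpos: "r > 0" using infdist_pos_not_in_closed[OF cl nb] r_def by simp
  define U where "U = - cball b0 (r/2)"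
  have "open U" unfolding U_def by (rule open_Compl[OF closed_cball])
  moreover have "F a0 \<subseteq> U"
  proof
    fix z assume "z \<in> F a0"
    then have "r \<le> dist b0 z" unfolding r_def by (rule infdist_le)
    then show "z \<in> U" using rpos by (auto simp: U_def)
  qed
  ultimately obtain V where V: "open V" "a0 \<in> V" "\<forall>y\<in>V. F y \<subseteq> U"
    using usc unfolding usc_def by blast
  have "eventually (\<lambda>k. a k \<in> V) sequentially"
    using a V(1,2) by (rule topological_tendstoD)
  moreover have "eventually (\<lambda>k. dist (b k) b0 < r/2) sequentially"
    using tendstoD[OF b, of "r/2"] rpos by simp
  ultimately have "eventually (\<lambda>k. False) sequentially"
    using ev
  proof eventually_elim
    case (elim k)
    then have "b k \<in> U" using V(3) by blast
    then show False using elim by (auto simp: U_def dist_commute)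
  qed
  then show False by simp
qed

lemma uniform_lsc:
  fixes F :: "'a::metric_space \<Rightarrow> 'a set"
  assumes cpt: "compact (UNIV :: 'a set)" and sm: "setval_map F"
    and cont: "setval_continuous F" and eta: "\<eta> > 0"
  shows "\<exists>\<delta>>0. \<forall>w w' p. dist w w' < \<delta> \<and> p \<in> F w \<longrightarrow> infdist p (F w') < \<eta>"
proof (rule ccontr)
  assume neg: "\<not> ?thesis"
  have neg': "\<forall>\<delta>>0. \<exists>w w' p. dist w w' < \<delta> \<and> p \<in> F w \<and> \<eta> \<le> infdist p (F w')"
    using neg by (simp add: not_less) (meson linorder_not_le)
  have "\<forall>k::nat. \<exists>w w' p. dist w w' < 1 / (real k + 1) \<and> p \<in> F w \<and> \<eta> \<le> infdist p (F w')"
  proof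
    fix k :: nat
    have "1 / (real k + 1) > 0" by simp
    then show "\<exists>w w' p. dist w w' < 1 / (real k + 1) \<and> p \<in> F w \<and> \<eta> \<le> infdist p (F w')"
      using neg' by blast
  qed
  then obtain w w' p where W: "\<And>k::nat. dist (w k) (w' k) < 1 / (real k + 1)"
    "\<And>k. p k \<in> F (w k)" "\<And>k. infdist (p k) (F (w' k)) \<ge> \<eta>"
    by metis
  have "compact (UNIV :: ('a \<times> 'a) set)"
    using compact_Times[OF cpt cpt] by simp
  then have "seq_compact (UNIV :: ('a \<times> 'a) set)" by (rule compact_imp_seq_compact)
  then obtain l r where r: "strict_mono r" and lim: "((\<lambda>k. (w k, p k)) \<circ> r) \<longlonglongrightarrow> l"
    unfolding seq_compact_def by blast
  define w0 p0 where "w0 = fst l" "p0 = snd l"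
  have wl: "(\<lambda>k. w (r k)) \<longlonglongrightarrow> w0"
    using tendsto_fst[OF lim] by (simp add: w0_p0_def o_def)
  have pl: "(\<lambda>k. p (r k)) \<longlonglongrightarrow> p0"
    using tendsto_snd[OF lim] by (simp add: w0_p0_def o_def)
  have d0: "(\<lambda>k. 1 / (real (r k) + 1)) \<longlonglongrightarrow> 0"
  proof -
    have e: "(\<lambda>k. 1 / (real k + 1)) = (\<lambda>n. inverse (real (Suc n)))"
      by (rule ext) (simp add: inverse_eq_divide)
    have h: "(\<lambda>k. 1 / (real k + 1)) \<longlonglongrightarrow> (0::real)"
      unfolding e by (rule LIMSEQ_inverse_real_of_nat)
    show ?thesis using LIMSEQ_subseq_LIMSEQ[OF h r] by (simp add: o_def)
  qed
  have le1: "\<And>k. dist (w (r k)) (w' (r k)) \<le> 1 / (real (r k) + 1)"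
    using W(1) by (simp add: less_imp_le)
  have t1: "(\<lambda>k. dist (w (r k)) (w' (r k))) \<longlonglongrightarrow> 0"
    by (rule tendsto_sandwich[OF always_eventually always_eventually tendsto_const d0])
       (blast intro: le1 zero_le_dist)+
  have t2: "(\<lambda>k. dist (w (r k)) w0) \<longlonglongrightarrow> 0"
    using tendsto_dist_iff[THEN iffD1, OF wl] .
  have t3: "(\<lambda>k. dist (w (r k)) (w' (r k)) + dist (w (r k)) w0) \<longlonglongrightarrow> 0"
    using tendsto_add[OF t1 t2] by simp
  have le2: "\<And>k. dist (w' (r k)) w0 \<le> dist (w (r k)) (w' (r k)) + dist (w (r k)) w0"
    by (rule dist_triangle3)
  have "(\<lambda>k. dist (w' (r k)) w0) \<longlonglongrightarrow> 0"
    by (rule tendsto_sandwich[OF always_eventually always_eventually tendsto_const t3])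
       (blast intro: le2 zero_le_dist)+
  then have w'l: "(\<lambda>k. w' (r k)) \<longlonglongrightarrow> w0"
    by (rule tendsto_dist_iff[THEN iffD2])
  have "p0 \<in> F w0"
    using closed_graph[OF _ sm wl pl] cont W(2) by (auto simp: setval_continuous_def)
  then have "F w0 \<inter> ball p0 (\<eta>/2) \<noteq> {}" using eta by auto
  then obtain V where V: "open V" "w0 \<in> V" "\<forall>y\<in>V. F y \<inter> ball p0 (\<eta>/2) \<noteq> {}"
    using cont unfolding setval_continuous_def lsc_def by (meson open_ball)
  have "eventually (\<lambda>k. w' (r k) \<in> V) sequentially"
    using w'l V(1,2) by (rule topological_tendstoD)
  moreover have "eventually (\<lambda>k. dist (p (r k)) p0 < \<eta>/2) sequentially"
    using tendstoD[OF pl, of "\<eta>/2"] eta by simp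
  ultimately have "eventually (\<lambda>k. False) sequentially"
  proof eventually_elim
    case (elim k)
    have "F (w' (r k)) \<inter> ball p0 (\<eta>/2) \<noteq> {}" using V(3) elim(1) by blast
    then obtain q where q: "q \<in> F (w' (r k))" "dist p0 q < \<eta>/2"
      by (metis IntE equals0I mem_ball)
    have "infdist (p (r k)) (F (w' (r k))) \<le> dist (p (r k)) q" by (rule infdist_le[OF q(1)])
    also have "\<dots> \<le> dist (p (r k)) p0 + dist p0 q" by (rule dist_triangle)
    also have "\<dots> < \<eta>" using elim q by simp
    finally show False using W(3)[of "r k"] by simp
  qed
  then show False by simp
qed

lemma compact_fun:
  assumes "compact (UNIV :: 'a::metric_space set)"
  shows "compact (UNIV :: (nat \<Rightarrow> 'a) set)"
proof -
  have "compact_space (euclidean :: 'a topology)"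
    using assms by (simp add: compact_space_def)
  then have "compact_space (product_topology (\<lambda>i::nat. euclidean :: 'a topology) UNIV)"
    by (simp add: compact_space_product_topology)
  then have "compact_space (euclidean :: (nat \<Rightarrow> 'a) topology)"
    by (simp add: euclidean_product_topology)
  then show ?thesis by (simp add: compact_space_def)
qed

theorem theorem4p7:
  fixes F :: "'a::metric_space \<Rightarrow> 'a set"
  assumes "compact (UNIV :: 'a set)"
    and "setval_map F"
    and "setval_onto F"
    and "setval_continuous F"
    and "shadowing F"
  shows "shadowing (setval_inverse F)"
proof -
  have usc: "usc F" using assms(4) by (simp add: setval_continuous_def)
  have ne: "\<And>x. F x \<noteq> {}" using assms(2) by (simp add: setval_map_def)
  show ?thesis unfolding shadowing_def
  proof (intro allI impI)
    fix \<epsilon> :: real assume \<epsilon>: "\<epsilon> > 0"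
    then have "\<epsilon>/2 > 0" by simp
    then obtain \<delta>0 where \<delta>0: "\<delta>0 > 0" "\<forall>xs. pseudo_orbit F \<delta>0 xs \<longrightarrow>
        (\<exists>ys. is_orbit F ys \<and> (\<forall>n. dist (xs n) (ys n) < \<epsilon>/2))"
      using assms(5)[unfolded shadowing_def, rule_format, OF \<open>\<epsilon>/2 > 0\<close>] by blast
    obtain \<delta> where \<delta>: "\<delta> > 0" "\<forall>w w' p. dist w w' < \<delta> \<and> p \<in> F w \<longrightarrow> infdist p (F w') < \<delta>0"
      using uniform_lsc[OF assms(1,2,4) \<delta>0(1)] by blast
    show "\<exists>\<delta>>0. \<forall>xs. pseudo_orbit (setval_inverse F) \<delta> xs \<longrightarrow>
        (\<exists>ys. is_orbit (setval_inverse F) ys \<and> (\<forall>n. dist (xs n) (ys n) < \<epsilon>))"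
    proof (rule exI[of _ \<delta>], intro conjI allI impI)
      show "\<delta> > 0" by (rule \<delta>(1))
      fix xs assume po: "pseudo_orbit (setval_inverse F) \<delta> xs"
      have step: "infdist (xs n) (F (xs (Suc n))) < \<delta>0" for n
      proof -
        have "setval_inverse F (xs n) \<noteq> {}"
          using assms(3) by (auto simp: setval_onto_def setval_inverse_def)
        moreover have "infdist (xs (Suc n)) (setval_inverse F (xs n)) < \<delta>"
          using po unfolding pseudo_orbit_def by blast
        ultimately obtain w where "w \<in> setval_inverse F (xs n)" "dist (xs (Suc n)) w < \<delta>"
          using infdist_lt_ex by blast
        then show ?thesis
          using \<delta>(2) by (auto simp: setval_inverse_def dist_commute)
      qed
      define orb where "orb = rec_nat (xs 0) (\<lambda>_ y. SOME z. z \<in> F y)"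
      have orb0: "orb 0 = xs 0" by (simp add: orb_def)
      have orbS: "orb (Suc n) \<in> F (orb n)" for n
      proof -
        have "orb (Suc n) = (SOME z. z \<in> F (orb n))" by (simp add: orb_def)
        then show ?thesis using some_in_eq[of "F (orb n)"] ne[of "orb n"] by simp
      qed
      define z where "z N k = (if k \<le> N then xs (N - k) else orb (k - N))" for N k
      have zpo: "pseudo_orbit F \<delta>0 (z N)" for N
        unfolding pseudo_orbit_def
      proof
        fix k
        show "infdist (z N (Suc k)) (F (z N k)) < \<delta>0"
        proof (cases "k < N")
          case True
          then have "z N (Suc k) = xs (N - Suc k)" "z N k = xs (Suc (N - Suc k))"
            by (auto simp: z_def Suc_diff_Suc)
          then show ?thesis using step by simp
        next
          case False
          have e1: "z N k = orb (k - N)" using False by (cases "k = N") (auto simp: z_def orb0)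
          have e2: "z N (Suc k) = orb (Suc (k - N))" using False by (auto simp: z_def Suc_diff_le)
          show ?thesis unfolding e1 e2 using infdist_zero[OF orbS] \<delta>0(1) by simp
        qed
      qed
      have "\<forall>N. \<exists>y. is_orbit F y \<and> (\<forall>k. dist (z N k) (y k) < \<epsilon>/2)"
        by (intro allI) (rule \<delta>0(2)[rule_format, OF zpo])
      from choice[OF this] obtain y where
        y': "\<forall>N. is_orbit F (y N) \<and> (\<forall>k. dist (z N k) (y N k) < \<epsilon>/2)" by blast
      have y: "\<And>N. is_orbit F (y N)" "\<And>N k. dist (z N k) (y N k) < \<epsilon>/2"
        using y' by simp_all
      define u where "u N n = y N (N - n)" for N n
      have uF: "u N n \<in> F (u N (Suc n))" if "n < N" for N n
      proof -
        have e: "N - n = Suc (N - Suc n)" using that by simp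
        show ?thesis unfolding u_def e using y(1)[of N] by (simp add: is_orbit_def)
      qed
      have ud: "dist (xs n) (u N n) < \<epsilon>/2" if "n \<le> N" for N n
      proof -
        have "z N (N - n) = xs n" using that by (simp add: z_def)
        then show ?thesis using y(2)[of N "N - n"] by (simp add: u_def)
      qed
      have "seq_compact (UNIV :: (nat \<Rightarrow> 'a) set)"
        using compact_imp_seq_compact compact_fun[OF assms(1)] by blast
      then obtain v r where r: "strict_mono r" and lim: "(u \<circ> r) \<longlonglongrightarrow> v"
        unfolding seq_compact_def by blast
      have lim_n: "(\<lambda>j. u (r j) n) \<longlonglongrightarrow> v n" for n
      proof -
        have "continuous_on UNIV (\<lambda>f::nat \<Rightarrow> 'a. f n)" by simp
        then have "isCont (\<lambda>f::nat \<Rightarrow> 'a. f n) v"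
          using continuous_on_eq_continuous_at[OF open_UNIV] by blast
        from isCont_tendsto_compose[OF this lim] show ?thesis by (simp add: o_def)
      qed
      have ev_big: "eventually (\<lambda>j. n < r j) sequentially" for n
      proof -
        have "\<forall>j\<ge>Suc n. n < r j"
        proof (intro allI impI)
          fix j assume "Suc n \<le> j"
          then show "n < r j" using seq_suble[OF r, of j] by linarith
        qed
        then show ?thesis unfolding eventually_sequentially by blast
      qed
      have orbv: "v n \<in> F (v (Suc n))" for n
      proof (rule closed_graph[OF usc assms(2) lim_n[of "Suc n"] lim_n[of n]])
        show "eventually (\<lambda>j. u (r j) n \<in> F (u (r j) (Suc n))) sequentially"
          by (rule eventually_mono[OF ev_big[of n]]) (rule uF)
      qed
      have dv: "dist (xs n) (v n) < \<epsilon>" for n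
      proof -
        have t: "(\<lambda>j. dist (xs n) (u (r j) n)) \<longlonglongrightarrow> dist (xs n) (v n)"
          by (intro tendsto_intros lim_n)
        have evl: "eventually (\<lambda>j. dist (xs n) (u (r j) n) \<le> \<epsilon>/2) sequentially"
          by (rule eventually_mono[OF ev_big[of n]]) (rule less_imp_le, rule ud, simp)
        then have "dist (xs n) (v n) \<le> \<epsilon>/2"
          using tendsto_upperbound[OF t evl] by simp
        then show ?thesis using \<epsilon> by simp
      qed
      show "\<exists>ys. is_orbit (setval_inverse F) ys \<and> (\<forall>n. dist (xs n) (ys n) < \<epsilon>)"
        using orbv dv by (auto simp: is_orbit_def setval_inverse_def)
    qed
  qed
qed

end
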